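(* Let $(G_1,\precsim_1)$ and $(G_2,\precsim_2)$ be compatible quasi-ordered abelian groups which are elementarily equivalent in the language $\{0,+,-,\precsim\}$. Then the ordered part of $G_1$ is elementarily equivalent to the ordered part of $G_2$, and the valued part of $G_1$ is elementarily equivalent to the valued part of $G_2$ (both in the language $\{0,+,-,\precsim\}$).
   Context: A compatible quasi-ordered abelian group is an abelian group $G$ with a total quasi-order $\precsim$ (reflexive, transitive, any two elements comparable) such that, writing $a\sim b$ for $a\precsim b\wedge b\precsim a$: $(Q_1)$ $x\sim0\Rightarrow x=0$; $(Q_2)$ $x\precsim y\wedge y\not\sim z\Rightarrow x+z\precsim y+z$. With $cl(g)$ the $\sim$-class of $g$, $g$ is o-type if $cl(g)=\{g\}$ and $g$ is not of order $2$; $G^o$, the set of o-type elements, is a subgroup. The ordered part of $G$ is $(G^o,\precsim|_{G^o})$; the valued part is $G/G^o$ with the quasi-order $g+G^o\precsim h+G^o\Leftrightarrow g-h\in G^o\vee(g-h\notin G^o\wedge g\precsim h)$. In the language, $-$ is the unary negation and $\precsim$ is interpreted as the quasi-order. *)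

theory Defs
  imports Main
begin

datatype trm = Var nat | Zero | Plus trm trm | Neg trm

datatype fm = FEq trm trm | FLe trm trm | FFalse | FNot fm | FAnd fm fm | FEx nat fm

primrec fv_trm :: "trm \<Rightarrow> nat set" where
  "fv_trm (Var n) = {n}"
| "fv_trm Zero = {}"
| "fv_trm (Plus s t) = fv_trm s \<union> fv_trm t"
| "fv_trm (Neg t) = fv_trm t"

primrec fv :: "fm \<Rightarrow> nat set" where
  "fv (FEq s t) = fv_trm s \<union> fv_trm t"
| "fv (FLe s t) = fv_trm s \<union> fv_trm t"
| "fv FFalse = {}"
| "fv (FNot p) = fv p"
| "fv (FAnd p q) = fv p \<union> fv q"
| "fv (FEx n p) = fv p - {n}"

definition sentence :: "fm \<Rightarrow> bool" where
  "sentence p \<longleftrightarrow> fv p = {}"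

record 'a lstr =
  carrier :: "'a set"
  zer :: 'a
  pls :: "'a \<Rightarrow> 'a \<Rightarrow> 'a"
  ng :: "'a \<Rightarrow> 'a"
  qle :: "'a \<Rightarrow> 'a \<Rightarrow> bool"

primrec evalt :: "'a lstr \<Rightarrow> (nat \<Rightarrow> 'a) \<Rightarrow> trm \<Rightarrow> 'a" where
  "evalt M e (Var n) = e n"
| "evalt M e Zero = zer M"
| "evalt M e (Plus s t) = pls M (evalt M e s) (evalt M e t)"
| "evalt M e (Neg t) = ng M (evalt M e t)"

primrec sat :: "'a lstr \<Rightarrow> (nat \<Rightarrow> 'a) \<Rightarrow> fm \<Rightarrow> bool" where
  "sat M e (FEq s t) = (evalt M e s = evalt M e t)"
| "sat M e (FLe s t) = qle M (evalt M e s) (evalt M e t)"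
| "sat M e FFalse = False"
| "sat M e (FNot p) = (\<not> sat M e p)"
| "sat M e (FAnd p q) = (sat M e p \<and> sat M e q)"
| "sat M e (FEx n p) = (\<exists>a\<in>carrier M. sat M (e(n := a)) p)"

definition models :: "'a lstr \<Rightarrow> fm \<Rightarrow> bool" where
  "models M p \<longleftrightarrow> (\<forall>e. (\<forall>n. e n \<in> carrier M) \<longrightarrow> sat M e p)"

definition elem_equiv :: "'a lstr \<Rightarrow> 'b lstr \<Rightarrow> bool" where
  "elem_equiv M N \<longleftrightarrow> (\<forall>p. sentence p \<longrightarrow> (models M p \<longleftrightarrow> models N p))"

definition qsim :: "('a \<Rightarrow> 'a \<Rightarrow> bool) \<Rightarrow> 'a \<Rightarrow> 'a \<Rightarrow> bool" where
  "qsim le a b \<longleftrightarrow> le a b \<and> le b a"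

definition cqoag :: "('a::ab_group_add \<Rightarrow> 'a \<Rightarrow> bool) \<Rightarrow> bool" where
  "cqoag le \<longleftrightarrow>
     (\<forall>x. le x x) \<and>
     (\<forall>x y z. le x y \<longrightarrow> le y z \<longrightarrow> le x z) \<and>
     (\<forall>x y. le x y \<or> le y x) \<and>
     (\<forall>x. qsim le x 0 \<longrightarrow> x = 0) \<and>
     (\<forall>x y z. le x y \<and> \<not> qsim le y z \<longrightarrow> le (x + z) (y + z))"

definition cl :: "('a \<Rightarrow> 'a \<Rightarrow> bool) \<Rightarrow> 'a \<Rightarrow> 'a set" where
  "cl le g = {h. qsim le h g}"

definition otype :: "('a::ab_group_add \<Rightarrow> 'a \<Rightarrow> bool) \<Rightarrow> 'a \<Rightarrow> bool" where
  "otype le g \<longleftrightarrow> cl le g = {g} \<and> \<not> (g \<noteq> 0 \<and> g + g = 0)"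

definition Go :: "('a::ab_group_add \<Rightarrow> 'a \<Rightarrow> bool) \<Rightarrow> 'a set" where
  "Go le = {g. otype le g}"

definition full_str :: "('a::ab_group_add \<Rightarrow> 'a \<Rightarrow> bool) \<Rightarrow> 'a lstr" where
  "full_str le = \<lparr>carrier = UNIV, zer = 0, pls = (+), ng = uminus, qle = le\<rparr>"

definition ordered_part :: "('a::ab_group_add \<Rightarrow> 'a \<Rightarrow> bool) \<Rightarrow> 'a lstr" where
  "ordered_part le = \<lparr>carrier = Go le, zer = 0, pls = (+), ng = uminus,
     qle = (\<lambda>a b. a \<in> Go le \<and> b \<in> Go le \<and> le a b)\<rparr>"

definition coset :: "('a::ab_group_add \<Rightarrow> 'a \<Rightarrow> bool) \<Rightarrow> 'a \<Rightarrow> 'a set" where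
  "coset le g = (\<lambda>h. g + h) ` Go le"

definition valued_part :: "('a::ab_group_add \<Rightarrow> 'a \<Rightarrow> bool) \<Rightarrow> 'a set lstr" where
  "valued_part le = \<lparr>carrier = range (coset le),
     zer = Go le,
     pls = (\<lambda>A B. {a + b | a b. a \<in> A \<and> b \<in> B}),
     ng = (\<lambda>A. uminus ` A),
     qle = (\<lambda>A B. \<exists>g h. A = coset le g \<and> B = coset le h \<and>
               (g - h \<in> Go le \<or> (g - h \<notin> Go le \<and> le g h)))\<rparr>"

end

theory Submission
  imports Defs
begin

lemma cq_refl: "cqoag le \<Longrightarrow> le x x" by (simp add: cqoag_def)
lemma cq_trans:
  assumes "cqoag le" "le x y" "le y z" shows "le x z"
proof -
  have "\<forall>x y z. le x y \<longrightarrow> le y z \<longrightarrow> le x z" using assms(1) by (simp add: cqoag_def)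
  thus ?thesis using assms(2,3) by blast
qed
lemma cq_total: "cqoag le \<Longrightarrow> le x y \<or> le y x" by (simp add: cqoag_def)
lemma cq_Q1:
  assumes "cqoag le" "qsim le x 0" shows "x = 0"
proof -
  have "\<forall>x. qsim le x 0 \<longrightarrow> x = 0" using assms(1) by (simp add: cqoag_def)
  thus ?thesis using assms(2) by blast
qed
lemma cq_Q2:
  assumes "cqoag le" "le x y" "\<not> qsim le y z" shows "le (x + z) (y + z)"
proof -
  have "\<forall>x y z. le x y \<and> \<not> qsim le y z \<longrightarrow> le (x + z) (y + z)" using assms(1) by (simp add: cqoag_def)
  thus ?thesis using assms(2,3) by blast
qed
lemma qsim_sym: "qsim le a b = qsim le b a" unfolding qsim_def by blast
lemma qsim_trans: "cqoag le \<Longrightarrow> qsim le a b \<Longrightarrow> qsim le b c \<Longrightarrow> qsim le a c"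
  unfolding qsim_def by (metis cq_trans)
lemma qsim_0: "cqoag le \<Longrightarrow> x \<noteq> 0 \<Longrightarrow> \<not> qsim le 0 x"
  by (metis cq_Q1 qsim_sym)

lemma otype_iff: "cqoag le \<Longrightarrow> otype le g \<longleftrightarrow> (\<forall>h. qsim le h g \<longrightarrow> h = g) \<and> \<not> (g \<noteq> 0 \<and> g + g = 0)"
  unfolding otype_def cl_def using cq_refl[of le g] by (auto simp: qsim_def)

lemma Go_iff: "g \<in> Go le \<longleftrightarrow> otype le g" by (simp add: Go_def)

lemma L0: "cqoag le \<Longrightarrow> otype le 0"
  by (simp add: otype_iff cq_Q1)

lemma L_not_neg:
  fixes g :: "'a::ab_group_add"
  assumes c: "cqoag le" and g: "otype le g" and g0: "g \<noteq> 0"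
  shows "\<not> qsim le g (-g)"
proof
  assume "qsim le g (-g)"
  hence "qsim le (-g) g" using qsim_sym by metis
  hence "-g = g" using g otype_iff[OF c] by blast
  hence "g + g = 0" by (metis ab_left_minus)
  thus False using g g0 otype_iff[OF c] by blast
qed

lemma L_neg:
  fixes g :: "'a::ab_group_add"
  assumes c: "cqoag le" and g: "otype le g"
  shows "otype le (-g)"
proof (cases "g = 0")
  case True thus ?thesis using L0[OF c] by simp
next
  case False
  have nn: "\<not> qsim le (-g) g" using L_not_neg[OF c g False] qsim_sym by metis
  have A: "\<forall>h. qsim le h (-g) \<longrightarrow> h = -g"
  proof (intro allI impI)
    fix h assume hq: "qsim le h (-g)"
    have "le (h + g) (-g + g)" using cq_Q2[OF c, of h "-g" g] hq nn by (auto simp: qsim_def)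
    hence 1: "le (h + g) 0" by simp
    have "\<not> qsim le h g" using hq nn qsim_trans[OF c] qsim_sym by metis
    hence "le (-g + g) (h + g)" using cq_Q2[OF c, of "-g" h g] hq by (auto simp: qsim_def)
    hence 2: "le 0 (h + g)" by simp
    have "h + g = 0" using cq_Q1[OF c] 1 2 by (auto simp: qsim_def)
    thus "h = -g" by (simp add: eq_neg_iff_add_eq_0)
  qed
  have "\<not> (-g \<noteq> 0 \<and> -g + -g = 0)"
  proof
    assume "-g \<noteq> 0 \<and> -g + -g = 0"
    hence "g \<noteq> 0 \<and> g + g = 0" by (metis minus_add_distrib neg_equal_0_iff_equal)
    thus False using g otype_iff[OF c] by blast
  qed
  thus ?thesis using A otype_iff[OF c] by blast
qed

lemma L_ord2:
  fixes d :: "'a::ab_group_add"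
  assumes c: "cqoag le" and d: "le d 0" and dd: "d + d = 0"
  shows "d = 0"
proof (rule ccontr)
  assume n: "d \<noteq> 0"
  have "le (d + d) (0 + d)" using cq_Q2[OF c d] qsim_0[OF c n] by blast
  hence "le 0 d" using dd by simp
  thus False using d n cq_Q1[OF c] by (auto simp: qsim_def)
qed

lemma L_ord3:
  fixes g :: "'a::ab_group_add"
  assumes c: "cqoag le" and g: "otype le g" and g3: "g + g + g = 0"
  shows "g = 0"
proof (rule ccontr)
  assume n: "g \<noteq> 0"
  have nn: "\<not> qsim le g (-g)" using L_not_neg[OF c g n] .
  have n0: "\<not> qsim le 0 g" using qsim_0[OF c n] .
  have n0': "\<not> qsim le 0 (-g)" using qsim_0[OF c] n by simp
  have e1: "-g + -g = g" using g3 by (metis add.assoc add_uminus_conv_diff diff_0 eq_neg_iff_add_eq_0 minus_add_distrib)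
  have e2: "g + g = -g" using g3 by (metis eq_neg_iff_add_eq_0)
  show False
  proof (cases "le 0 g")
    case True
    have "le (0 + -g) (g + -g)" using cq_Q2[OF c True nn] .
    hence a: "le (-g) 0" by simp
    have "le (-g + -g) (0 + -g)" using cq_Q2[OF c a n0'] .
    hence "le g (-g)" using e1 by simp
    hence "le g 0" using a cq_trans[OF c] by blast
    thus False using True n cq_Q1[OF c] by (auto simp: qsim_def)
  next
    case False
    hence a: "le g 0" using cq_total[OF c] by blast
    have "le (g + g) (0 + g)" using cq_Q2[OF c a n0] .
    hence b: "le (-g) g" using e2 by simp
    have "le (g + -g) (0 + -g)" using cq_Q2[OF c a n0'] .
    hence "le 0 (-g)" by simp
    hence "le 0 g" using b cq_trans[OF c] by blast
    thus False using False by simp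
  qed
qed

lemma L_add:
  fixes g k :: "'a::ab_group_add"
  assumes c: "cqoag le" and g: "otype le g" and k: "otype le k"
  shows "otype le (g + k)"
proof -
  have A: "\<forall>h. qsim le h (g + k) \<longrightarrow> h = g + k"
  proof (intro allI impI)
    fix h assume hq: "qsim le h (g + k)"
    have gen: "h = a + b" if hq': "qsim le h (a + b)" and a: "otype le a" and nq: "\<not> qsim le (a + b) (-b)"
      for a b
    proof -
      have "le (h + -b) (a + b + -b)" using cq_Q2[OF c, of h "a+b" "-b"] hq' nq by (auto simp: qsim_def)
      hence 1: "le (h - b) a" by simp
      have "\<not> qsim le h (-b)" using hq' nq qsim_trans[OF c] qsim_sym by metis
      hence "le (a + b + -b) (h + -b)" using cq_Q2[OF c, of "a+b" h "-b"] hq' by (auto simp: qsim_def)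
      hence 2: "le a (h - b)" by simp
      have "h - b = a" using a otype_iff[OF c] 1 2 by (auto simp: qsim_def)
      thus ?thesis by (simp add: diff_eq_eq)
    qed
    show "h = g + k"
    proof (cases "qsim le (g + k) (-k)")
      case False thus ?thesis using gen[OF hq g] by blast
    next
      case T1: True
      show ?thesis
      proof (cases "qsim le (k + g) (-g)")
        case False thus ?thesis using gen[of k g] hq k by (simp add: add.commute)
      next
        case T2: True
        have "qsim le (-k) (-g)" using T1 T2 qsim_trans[OF c] qsim_sym by (metis add.commute)
        hence "-k = -g" using L_neg[OF c g] otype_iff[OF c] by blast
        hence kg: "k = g" by simp
        have "qsim le (g + g) (-g)" using T2 kg by simp
        hence "g + g = -g" using L_neg[OF c g] otype_iff[OF c] by blast
        hence "g + g + g = 0" by (simp add: eq_neg_iff_add_eq_0)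
        hence "g = 0" using L_ord3[OF c g] by blast
        hence "g + k = 0" using kg by simp
        thus ?thesis using hq cq_Q1[OF c] by simp
      qed
    qed
  qed
  have B: "\<not> (g + k \<noteq> 0 \<and> (g + k) + (g + k) = 0)"
  proof
    assume d: "g + k \<noteq> 0 \<and> (g + k) + (g + k) = 0"
    have k0: "k \<noteq> 0" using d g otype_iff[OF c] by auto
    have g0: "g \<noteq> 0" using d k otype_iff[OF c] by auto
    show False
    proof (cases "le g (-k)")
      case True
      have "\<not> qsim le (-k) k" using L_not_neg[OF c k k0] qsim_sym by metis
      hence "le (g + k) (-k + k)" using cq_Q2[OF c True] by blast
      hence "le (g + k) 0" by simp
      thus False using L_ord2[OF c] d by blast
    next
      case False
      hence a: "le (-k) g" using cq_total[OF c] by blast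
      have "le (-k + -g) (g + -g)" using cq_Q2[OF c a L_not_neg[OF c g g0]] .
      hence 1: "le (-k + -g) 0" by simp
      have "(-k + -g) + (-k + -g) = 0" using d
        by (metis add.commute minus_add_distrib neg_equal_0_iff_equal)
      hence "-k + -g = 0" using L_ord2[OF c 1] by blast
      hence "g + k = 0" by (metis add.commute minus_add_distrib neg_equal_0_iff_equal)
      thus False using d by blast
    qed
  qed
  show ?thesis using A B otype_iff[OF c] by blast
qed

section \<open>Cosets\<close>

lemma coset_mem: "x \<in> coset le a \<longleftrightarrow> x - a \<in> Go le"
  unfolding coset_def by (auto simp: image_iff) (metis add.commute diff_add_cancel)

lemma coset_eq:
  fixes a b :: "'a::ab_group_add"
  assumes c: "cqoag le"
  shows "coset le a = coset le b \<longleftrightarrow> a - b \<in> Go le"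
proof
  assume "coset le a = coset le b"
  moreover have "a \<in> coset le a" by (simp add: coset_mem Go_iff L0[OF c])
  ultimately show "a - b \<in> Go le" using coset_mem by blast
next
  assume ab: "a - b \<in> Go le"
  have ba: "b - a \<in> Go le" using L_neg[OF c] ab Go_iff by (metis minus_diff_eq)
  show "coset le a = coset le b"
  proof (rule set_eqI)
    fix x
    have 1: "x - b = (x - a) + (a - b)" by simp
    have 2: "x - a = (x - b) + (b - a)" by simp
    show "x \<in> coset le a \<longleftrightarrow> x \<in> coset le b"
      unfolding coset_mem using 1 2 ab ba L_add[OF c] Go_iff by metis
  qed
qed

lemma coset_pls:
  fixes a b :: "'a::ab_group_add"
  assumes c: "cqoag le"
  shows "{x + y |x y. x \<in> coset le a \<and> y \<in> coset le b} = coset le (a + b)"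
proof (rule set_eqI, rule iffI)
  fix z assume "z \<in> {x + y |x y. x \<in> coset le a \<and> y \<in> coset le b}"
  then obtain x y where z: "z = x + y" and x: "x - a \<in> Go le" and y: "y - b \<in> Go le"
    using coset_mem by blast
  have "z - (a + b) = (x - a) + (y - b)" using z by simp
  thus "z \<in> coset le (a + b)" using coset_mem x y L_add[OF c] Go_iff by metis
next
  fix z assume "z \<in> coset le (a + b)"
  hence 1: "(z - b) - a \<in> Go le" using coset_mem by (metis diff_diff_eq add.commute)
  have 2: "b - b \<in> Go le" using L0[OF c] by (simp add: Go_iff)
  have "z = (z - b) + b" by simp
  thus "z \<in> {x + y |x y. x \<in> coset le a \<and> y \<in> coset le b}" using 1 2 coset_mem by blast
qed

lemma coset_ng:
  fixes a :: "'a::ab_group_add"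
  assumes c: "cqoag le"
  shows "uminus ` coset le a = coset le (-a)"
proof (rule set_eqI, rule iffI)
  fix z assume "z \<in> uminus ` coset le a"
  then obtain x where z: "z = -x" and x: "x - a \<in> Go le" using coset_mem by blast
  have "z - (-a) = -(x - a)" using z by simp
  thus "z \<in> coset le (-a)" using coset_mem x L_neg[OF c] Go_iff by metis
next
  fix z assume "z \<in> coset le (-a)"
  hence "z - (-a) \<in> Go le" using coset_mem by blast
  hence "z + a \<in> Go le" by simp
  hence "-(z + a) \<in> Go le" using L_neg[OF c] Go_iff by blast
  moreover have "-(z + a) = -z - a" by (simp add: algebra_simps)
  ultimately have "-z - a \<in> Go le" by simp
  hence "-z \<in> coset le a" using coset_mem by blast
  thus "z \<in> uminus ` coset le a" by (metis image_eqI minus_minus)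
qed

lemma coset_0: "Go le = coset le 0"
  using coset_mem by (metis diff_zero subsetI subset_antisym)

lemma evalt_V:
  assumes c: "cqoag le"
  shows "evalt (valued_part le) (coset le \<circ> f) t = coset le (evalt (full_str le) f t)"
  by (induction t) (simp_all add: valued_part_def full_str_def coset_pls[OF c] coset_ng[OF c] coset_0[symmetric])

lemma evalt_V':
  assumes c: "cqoag le"
  shows "evalt (valued_part le) (\<lambda>a. coset le (f a)) t = coset le (evalt (full_str le) f t)"
  using evalt_V[OF c, of f t] by (simp add: comp_def)

primrec mx :: "trm \<Rightarrow> nat" where
  "mx (Var n) = n"
| "mx Zero = 0"
| "mx (Plus s t) = max (mx s) (mx t)"
| "mx (Neg t) = mx t"

lemma mx_fv: "n \<in> fv_trm t \<Longrightarrow> n \<le> mx t"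
  by (induction t) auto

lemma evalt_upd: "mx t < n \<Longrightarrow> evalt M (e(n := a)) t = evalt M e t"
  by (induction t) auto

lemma evalt_agree: "(\<forall>n\<in>fv_trm t. e n = e' n) \<Longrightarrow> evalt M e t = evalt M e' t"
  by (induction t) auto

lemma sat_agree: "(\<forall>n\<in>fv p. e n = e' n) \<Longrightarrow> sat M e p = sat M e' p"
proof (induction p arbitrary: e e')
  case (FEq s t) thus ?case using evalt_agree[of s e e' M] evalt_agree[of t e e' M] by simp
next
  case (FLe s t) thus ?case using evalt_agree[of s e e' M] evalt_agree[of t e e' M] by simp
next
  case (FEx n p)
  have "\<And>a. sat M (e(n := a)) p = sat M (e'(n := a)) p"
    using FEx.IH FEx.prems by simp
  thus ?case by simp
next
  case (FNot p) thus ?case by simp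
next
  case (FAnd p q)
  have "sat M e p = sat M e' p" "sat M e q = sat M e' q" using FAnd by auto
  thus ?case by simp
qed auto

definition inGo :: "trm \<Rightarrow> fm" where
  "inGo t = FAnd (FNot (FEx (Suc (mx t))
       (FAnd (FLe (Var (Suc (mx t))) t) (FAnd (FLe t (Var (Suc (mx t)))) (FNot (FEq (Var (Suc (mx t))) t))))))
     (FNot (FAnd (FNot (FEq t Zero)) (FEq (Plus t t) Zero)))"

lemma fv_inGo: "fv (inGo t) \<subseteq> fv_trm t"
  by (auto simp: inGo_def)

lemma sat_inGo:
  assumes c: "cqoag le"
  shows "sat (full_str le) e (inGo t) \<longleftrightarrow> otype le (evalt (full_str le) e t)"
  using evalt_upd[of t "Suc (mx t)" "full_str le" e]
  by (simp add: inGo_def otype_iff[OF c] qsim_def) (auto simp: full_str_def)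

section \<open>Ordered part\<close>

primrec T1 :: "fm \<Rightarrow> fm" where
  "T1 (FEq s t) = FEq s t"
| "T1 (FLe s t) = FAnd (inGo s) (FAnd (inGo t) (FLe s t))"
| "T1 FFalse = FFalse"
| "T1 (FNot p) = FNot (T1 p)"
| "T1 (FAnd p q) = FAnd (T1 p) (T1 q)"
| "T1 (FEx n p) = FEx n (FAnd (inGo (Var n)) (T1 p))"

lemma fv_T1: "fv (T1 p) \<subseteq> fv p"
proof (induction p)
  case (FLe s t) thus ?case using fv_inGo[of s] fv_inGo[of t] by auto
next
  case (FEx n p) thus ?case using fv_inGo[of "Var n"] by auto
qed auto

lemma evalt_O: "evalt (ordered_part le) e t = evalt (full_str le) e t"
  by (induction t) (simp_all add: ordered_part_def full_str_def)

lemma sat_T1: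
  assumes c: "cqoag le"
  shows "(\<forall>n. e n \<in> Go le) \<Longrightarrow> sat (ordered_part le) e p \<longleftrightarrow> sat (full_str le) e (T1 p)"
proof (induction p arbitrary: e)
  case (FEq s t) thus ?case by (simp add: evalt_O)
next
  case (FLe s t) thus ?case
    by (simp add: evalt_O sat_inGo[OF c] Go_iff) (simp add: ordered_part_def full_str_def Go_iff)
next
  case (FEx n p)
  have "sat (ordered_part le) e (FEx n p) \<longleftrightarrow> (\<exists>a\<in>Go le. sat (ordered_part le) (e(n := a)) p)"
    by (simp add: ordered_part_def)
  also have "\<dots> \<longleftrightarrow> (\<exists>a\<in>Go le. sat (full_str le) (e(n := a)) (T1 p))"
  proof -
    have "\<And>a. a \<in> Go le \<Longrightarrow> sat (ordered_part le) (e(n := a)) p = sat (full_str le) (e(n := a)) (T1 p)"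
    proof -
      fix a assume a: "a \<in> Go le"
      have "\<forall>m. (e(n := a)) m \<in> Go le" using a FEx.prems by simp
      thus "sat (ordered_part le) (e(n := a)) p = sat (full_str le) (e(n := a)) (T1 p)" using FEx.IH by blast
    qed
    thus ?thesis by blast
  qed
  also have "\<dots> \<longleftrightarrow> sat (full_str le) e (T1 (FEx n p))"
    by (simp add: sat_inGo[OF c] Go_iff) (auto simp: full_str_def Go_iff)
  finally show ?case .
qed auto

lemma models_T1:
  assumes c: "cqoag le" and s: "sentence p"
  shows "models (ordered_part le) p \<longleftrightarrow> models (full_str le) (T1 p)"
proof
  assume m: "models (ordered_part le) p"
  have z: "\<forall>n. (\<lambda>_. 0) n \<in> Go le" using L0[OF c] by (simp add: Go_iff)
  hence "sat (ordered_part le) (\<lambda>_. 0) p" using m by (simp add: models_def ordered_part_def)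
  hence 1: "sat (full_str le) (\<lambda>_. 0) (T1 p)" using sat_T1[OF c z] by blast
  have fv0: "fv (T1 p) = {}" using fv_T1[of p] s by (auto simp: sentence_def)
  show "models (full_str le) (T1 p)" unfolding models_def
  proof (intro allI impI)
    fix e :: "nat \<Rightarrow> 'a"
    show "sat (full_str le) e (T1 p)" using 1 sat_agree[of "T1 p" e "\<lambda>_. 0" "full_str le"] fv0 by simp
  qed
next
  assume "models (full_str le) (T1 p)"
  thus "models (ordered_part le) p" using sat_T1[OF c]
    by (simp add: models_def ordered_part_def full_str_def)
qed

section \<open>Valued part\<close>

primrec T2 :: "fm \<Rightarrow> fm" where
  "T2 (FEq s t) = inGo (Plus s (Neg t))"
| "T2 (FLe s t) = FEx (Suc (max (mx s) (mx t))) (FEx (Suc (Suc (max (mx s) (mx t))))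
     (FAnd (inGo (Plus s (Neg (Var (Suc (max (mx s) (mx t)))))))
       (FAnd (inGo (Plus t (Neg (Var (Suc (Suc (max (mx s) (mx t))))))))
         (FNot (FAnd (FNot (inGo (Plus (Var (Suc (max (mx s) (mx t)))) (Neg (Var (Suc (Suc (max (mx s) (mx t)))))))))
                     (FNot (FLe (Var (Suc (max (mx s) (mx t)))) (Var (Suc (Suc (max (mx s) (mx t))))))))))))"
| "T2 FFalse = FFalse"
| "T2 (FNot p) = FNot (T2 p)"
| "T2 (FAnd p q) = FAnd (T2 p) (T2 q)"
| "T2 (FEx n p) = FEx n (T2 p)"

lemma fv_T2: "fv (T2 p) \<subseteq> fv p"
proof (induction p)
  case (FEq s t) thus ?case using fv_inGo[of "Plus s (Neg t)"] by auto
next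
  case (FLe s t)
  let ?x = "Suc (max (mx s) (mx t))" let ?y = "Suc (Suc (max (mx s) (mx t)))"
  show ?case using fv_inGo[of "Plus s (Neg (Var ?x))"] fv_inGo[of "Plus t (Neg (Var ?y))"]
      fv_inGo[of "Plus (Var ?x) (Neg (Var ?y))"] by auto
qed auto

lemma sat_T2:
  assumes c: "cqoag le"
  shows "sat (valued_part le) (coset le \<circ> f) p \<longleftrightarrow> sat (full_str le) f (T2 p)"
proof (induction p arbitrary: f)
  case (FEq s t) thus ?case
    by (simp add: evalt_V'[OF c] coset_eq[OF c] sat_inGo[OF c] Go_iff)
       (simp add: full_str_def)
next
  case (FLe s t)
  let ?x = "Suc (max (mx s) (mx t))" let ?y = "Suc (Suc (max (mx s) (mx t)))"
  define a where "a = evalt (full_str le) f s"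
  define b where "b = evalt (full_str le) f t"
  have "sat (full_str le) f (T2 (FLe s t)) \<longleftrightarrow>
     (\<exists>g h. otype le (evalt (full_str le) f s + - g) \<and> otype le (evalt (full_str le) f t + - h)
         \<and> (otype le (g + - h) \<or> le g h))"
    using evalt_upd[of s ?x "full_str le"] evalt_upd[of s ?y "full_str le"]
      evalt_upd[of t ?x "full_str le"] evalt_upd[of t ?y "full_str le"]
    by (simp add: sat_inGo[OF c]) (auto simp: full_str_def)
  also have "\<dots> \<longleftrightarrow> qle (valued_part le) (coset le a) (coset le b)"
    unfolding a_def b_def by (auto simp: valued_part_def coset_eq[OF c] Go_iff)
  also have "\<dots> \<longleftrightarrow> sat (valued_part le) (coset le \<circ> f) (FLe s t)"
    unfolding a_def b_def sat.simps evalt_V[OF c] ..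
  finally show ?case by blast
next
  case (FEx n p)
  have "sat (valued_part le) (coset le \<circ> f) (FEx n p) \<longleftrightarrow>
        (\<exists>a. sat (valued_part le) ((coset le \<circ> f)(n := coset le a)) p)"
    by (auto simp: valued_part_def)
  also have "\<dots> \<longleftrightarrow> (\<exists>a. sat (valued_part le) (coset le \<circ> (f(n := a))) p)"
    by (simp add: fun_upd_comp)
  also have "\<dots> \<longleftrightarrow> (\<exists>a. sat (full_str le) (f(n := a)) (T2 p))" by (simp only: FEx.IH)
  also have "\<dots> \<longleftrightarrow> sat (full_str le) f (T2 (FEx n p))" by (simp add: full_str_def)
  finally show ?case .
qed auto

lemma models_T2:
  assumes c: "cqoag le"
  shows "models (valued_part le) p \<longleftrightarrow> models (full_str le) (T2 p)"
proof
  assume m: "models (valued_part le) p"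
  show "models (full_str le) (T2 p)" unfolding models_def
  proof (intro allI impI)
    fix f
    have "sat (valued_part le) (coset le \<circ> f) p" using m by (simp add: models_def valued_part_def)
    thus "sat (full_str le) f (T2 p)" using sat_T2[OF c] by blast
  qed
next
  assume m: "models (full_str le) (T2 p)"
  show "models (valued_part le) p" unfolding models_def
  proof (intro allI impI)
    fix e :: "nat \<Rightarrow> 'a set" assume e: "\<forall>n. e n \<in> carrier (valued_part le)"
    define f where "f n = (SOME a. e n = coset le a)" for n :: nat
    have "e = coset le \<circ> f"
    proof
      fix n
      have "e n \<in> range (coset le)" using e by (simp add: valued_part_def)
      hence "\<exists>a. e n = coset le a" by auto
      thus "e n = (coset le \<circ> f) n" unfolding f_def by (metis (mono_tags, lifting) someI_ex comp_apply)
    qed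
    moreover have "sat (full_str le) f (T2 p)" using m by (simp add: models_def full_str_def)
    ultimately show "sat (valued_part le) e p" using sat_T2[OF c] by simp
  qed
qed

theorem mainTheorem16:
  fixes le1 :: "'a::ab_group_add \<Rightarrow> 'a \<Rightarrow> bool"
    and le2 :: "'b::ab_group_add \<Rightarrow> 'b \<Rightarrow> bool"
  assumes "cqoag le1" and "cqoag le2"
    and "elem_equiv (full_str le1) (full_str le2)"
  shows "elem_equiv (ordered_part le1) (ordered_part le2)
       \<and> elem_equiv (valued_part le1) (valued_part le2)"
proof
  show "elem_equiv (ordered_part le1) (ordered_part le2)"
    unfolding elem_equiv_def
  proof (intro allI impI)
    fix p assume s: "sentence p"
    have "sentence (T1 p)" using fv_T1[of p] s by (auto simp: sentence_def)
    thus "models (ordered_part le1) p = models (ordered_part le2) p"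
      using assms(3) models_T1[OF assms(1) s] models_T1[OF assms(2) s] by (simp add: elem_equiv_def)
  qed
  show "elem_equiv (valued_part le1) (valued_part le2)"
    unfolding elem_equiv_def
  proof (intro allI impI)
    fix p assume s: "sentence p"
    have "sentence (T2 p)" using fv_T2[of p] s by (auto simp: sentence_def)
    thus "models (valued_part le1) p = models (valued_part le2) p"
      using assms(3) models_T2[OF assms(1)] models_T2[OF assms(2)] by (simp add: elem_equiv_def)
  qed
qed

end
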